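(* Let $x_s<x_t$ be integers, let $C\ge 0$, and let $f:[x_s,x_t]\to\mathbb{R}$ be such that $([x_s,x_t],f)$ is an Ameso($C$) pair. Suppose there exist $x^0\in[x_s,x_t]$ and a positive integer $b$ with $[x^0,x^0+b]\subseteq[x_s,x_t]$ such that (a) $f(x^0)=\min_{y\in[x^0,x^0+b]}f(y)$ and (b) $f(x^0)+C\le\max_{y\in[x^0,x^0+b]}f(y)$. Let $z$ be the largest element of $[x^0,x^0+b]$ at which $f$ attains $\max_{y\in[x^0,x^0+b]}f(y)$. Then $x^0+\frac b2<z\le x^0+b$.
   Context: For integers $a\le b$, $[a,b]$ denotes the set of integers $\{a,a+1,\dots,b\}$. Floors and ceilings of vectors are taken componentwise. A set $D^n\subseteq\mathbb{Z}^n$ is an Ameso set if $\lceil(\vec x+\vec y)/2\rceil,\lfloor(\vec x+\vec y)/2\rfloor\in D^n$ for all $\vec x,\vec y\in D^n$. For $C\ge 0$, $(D^n,f)$ is an Ameso($C$) pair if $D^n$ is an Ameso set, $f:D^n\to\mathbb{R}$ is bounded below, and $f(\vec x)+f(\vec y)+C\ge f(\lceil(\vec x+\vec y)/2\rceil)+f(\lfloor(\vec x+\vec y)/2\rfloor)$ for all $\vec x,\vec y\in D^n$. *)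

theory Defs
  imports "HOL-Analysis.Analysis"
begin

definition ameso_set :: "int set \<Rightarrow> bool" where
  "ameso_set D \<longleftrightarrow> (\<forall>x\<in>D. \<forall>y\<in>D.
      \<lceil>real_of_int (x + y) / 2\<rceil> \<in> D \<and> \<lfloor>real_of_int (x + y) / 2\<rfloor> \<in> D)"

definition ameso_pair :: "real \<Rightarrow> int set \<Rightarrow> (int \<Rightarrow> real) \<Rightarrow> bool" where
  "ameso_pair C D f \<longleftrightarrow> ameso_set D \<and> bdd_below (f ` D) \<and>
     (\<forall>x\<in>D. \<forall>y\<in>D. f x + f y + C \<ge>
        f \<lceil>real_of_int (x + y) / 2\<rceil> + f \<lfloor>real_of_int (x + y) / 2\<rfloor>)"

end

theory Submission
  imports Defs
begin

theorem lemma2: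
  fixes xs xt x0 b z :: int and C :: real and f :: "int \<Rightarrow> real"
  assumes "xs < xt"
    and "C \<ge> 0"
    and "ameso_pair C {xs..xt} f"
    and "x0 \<in> {xs..xt}"
    and "b > 0"
    and "{x0..x0+b} \<subseteq> {xs..xt}"
    and "f x0 = Min (f ` {x0..x0+b})"
    and "f x0 + C \<le> Max (f ` {x0..x0+b})"
    and "z = (GREATEST y. y \<in> {x0..x0+b} \<and> f y = Max (f ` {x0..x0+b}))"
  shows "real_of_int x0 + real_of_int b / 2 < real_of_int z \<and> z \<le> x0 + b"
proof -
  define M where "M = Max (f ` {x0..x0+b})"
  define S where "S = {y \<in> {x0..x0+b}. f y = M}"
  have fin: "finite (f ` {x0..x0+b})" by simp
  have ne: "f ` {x0..x0+b} \<noteq> {}" using assms(5) by auto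
  have "M \<in> f ` {x0..x0+b}" unfolding M_def using Max_in[OF fin ne] .
  then have Sne: "S \<noteq> {}" unfolding S_def by auto
  have Sfin: "finite S" unfolding S_def by (rule finite_subset[of _ "{x0..x0+b}"]) auto
  define w where "w = Max S"
  have wS: "w \<in> S" unfolding w_def using Max_in[OF Sfin Sne] .
  have z: "z = w" unfolding assms(9) M_def[symmetric]
    apply (rule Greatest_equality)
    using wS Sfin unfolding S_def w_def by auto
  have zin: "z \<in> {x0..x0+b}" and fz: "f z = M" using wS z S_def by auto
  have grt: "\<And>y. y \<in> {x0..x0+b} \<Longrightarrow> y > z \<Longrightarrow> f y < M"
  proof -
    fix y assume y: "y \<in> {x0..x0+b}" "y > z"
    have "f y \<le> M" unfolding M_def using y fin by auto
    moreover have "f y \<noteq> M"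
    proof
      assume "f y = M" then have "y \<in> S" using y S_def by auto
      then have "y \<le> w" unfolding w_def using Sfin by auto
      then show False using y z by auto
    qed
    ultimately show "f y < M" by auto
  qed
  have minle: "\<And>y. y \<in> {x0..x0+b} \<Longrightarrow> f x0 \<le> f y"
    using assms(7) fin by auto
  have "\<not> (2*z \<le> 2*x0 + b)"
  proof
    assume h: "2*z \<le> 2*x0 + b"
    show False
    proof (cases "z = x0")
      case True
      have "x0+b \<in> {x0..x0+b}" using assms(5) by auto
      then have "f (x0+b) < M" using grt True assms(5) by auto
      moreover have "f x0 \<le> f (x0+b)" using minle \<open>x0+b \<in> _\<close> by auto
      ultimately show False using fz True assms(2,8) M_def by auto
    next
      case False
      define y where "y = 2*z - x0"
      have yin: "y \<in> {x0..x0+b}" "y > z" using h zin False y_def by auto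
      have x0in: "x0 \<in> {xs..xt}" using assms(4) .
      have yin2: "y \<in> {xs..xt}" using yin assms(6) by auto
      have "f x0 + f y + C \<ge> f \<lceil>real_of_int (x0 + y) / 2\<rceil> + f \<lfloor>real_of_int (x0 + y) / 2\<rfloor>"
        using assms(3) x0in yin2 unfolding ameso_pair_def by blast
      moreover have "real_of_int (x0 + y) / 2 = real_of_int z" unfolding y_def by simp
      ultimately have "f x0 + f y + C \<ge> 2 * M" using fz by simp
      moreover have "f y < M" using grt yin by auto
      ultimately show False using assms(8) M_def by auto
    qed
  qed
  then show ?thesis using zin by auto
qed

end
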